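(* Let $M\in\mathrm{M}_n(\mathbb{K})$ be a cyclic matrix with minimal polynomial $f=f_1^{m_1}\cdots f_s^{m_s}$, where $f_1,\dots,f_s\in\mathbb{K}[x]$ are pairwise distinct monic irreducible polynomials and $m_i\ge1$. Let $g\in\mathbb{L}[x]$ be a monic divisor of $f$, written $g=g_1\cdots g_s$ with $g_i\mid f_i^{m_i}$ in $\mathbb{L}[x]$. For each $i$ let $\ell_i=0$ if $g_i=1$, and $\ell_i=\min\{\ell\in\{1,\dots,m_i\} : g_i\mid f_i^{\ell}\}$ if $g_i\neq1$. Let $d=n-\sum_i\ell_i\deg f_i$ and let $v\in\mathbb{K}^n$ be a cyclic vector for $M$. Then: (1) $g\,\mathbb{L}[x]\cap\mathbb{K}[x]=\big(\prod_{i=1}^sf_i^{\ell_i}\big)\mathbb{K}[x]$; (2) the map $Q\in\mathbb{K}[x]_{<d}\mapsto v\,\big(\prod_i f_i^{\ell_i}\big)(M)^tQ(M)^t$ is a $\mathbb{K}$-linear isomorphism onto $\mathcal{C}_g\cap\mathbb{K}^n$; in particular $\dim_{\mathbb{K}}(\mathcal{C}_g\cap\mathbb{K}^n)=\sum_{i=1}^s(m_i-\ell_i)\deg f_i$; (3) if $\mathcal{C}_g\neq\{0\}$, then $M_1(\mathcal{C}_g)=1$ if and only if there exists $i$ with $\ell_i\le m_i-1$, i.e. with $g_i\mid f_i^{m_i-1}$.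
   Context: Let $\mathbb{L}/\mathbb{K}$ be a field extension of finite degree $m\ge n$. Vectors are row vectors; $\mathbb{F}[x]_{<d}$ denotes polynomials of degree $<d$. For $c=(c_1,\dots,c_n)\in\mathbb{L}^n$, $\mathrm{wt}_R(c)=\dim_{\mathbb{K}}\mathrm{Span}_{\mathbb{K}}(c_1,\dots,c_n)$, and for a nonzero linear code $\mathcal{C}\subseteq\mathbb{L}^n$, $M_1(\mathcal{C})=\min\{\mathrm{wt}_R(c):0\neq c\in\mathcal{C}\}$ (the first generalized rank weight). A matrix $M\in\mathrm{M}_n(\mathbb{K})$ is cyclic if there is $v\in\mathbb{K}^n$ (a cyclic vector) with $(v,vM^t,\dots,v(M^t)^{n-1})$ a basis; equivalently its minimal polynomial $f$ has degree $n$. For a monic divisor $g$ of $f$ in $\mathbb{L}[x]$, $\mathcal{C}_g=\{v\,g(M)^tP(M)^t : P\in\mathbb{L}[x]\}\subseteq\mathbb{L}^n$ (independent of the cyclic vector $v\in\mathbb{K}^n$, of dimension $n-\deg g$); every $\mathbb{L}$-subspace of $\mathbb{L}^n$ stable under $c\mapsto cM^t$ (an $M$-cyclic code) is $\mathcal{C}_g$ for a unique $g$, called its generator polynomial. *)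

theory Defs
  imports "HOL-Analysis.Analysis" "HOL-Computational_Algebra.Polynomial"
begin

text \<open>Field extension L/K, modelled by an injective field homomorphism emb : K \<rightarrow> L.\<close>
definition is_field_emb :: "('k::field \<Rightarrow> 'l::field) \<Rightarrow> bool" where
  "is_field_emb emb \<longleftrightarrow> inj emb \<and> emb 1 = 1 \<and>
     (\<forall>a b. emb (a + b) = emb a + emb b) \<and> (\<forall>a b. emb (a * b) = emb a * emb b)"

text \<open>L as a K-vector space.\<close>
definition ext_scale :: "('k::field \<Rightarrow> 'l::field) \<Rightarrow> 'k \<Rightarrow> 'l \<Rightarrow> 'l" where
  "ext_scale emb c x = emb c * x"

definition finite_degree :: "('k::field \<Rightarrow> 'l::field) \<Rightarrow> bool" where
  "finite_degree emb \<longleftrightarrow> (\<exists>B. finite B \<and> module.span (ext_scale emb) B = UNIV)"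

definition ext_degree :: "('k::field \<Rightarrow> 'l::field) \<Rightarrow> nat" where
  "ext_degree emb = vector_space.dim (ext_scale emb) (UNIV :: 'l set)"

text \<open>Matrix powers and polynomial evaluation at a square matrix.\<close>
primrec mat_pow :: "'a::comm_ring_1^'n^'n \<Rightarrow> nat \<Rightarrow> 'a^'n^'n" where
  "mat_pow A 0 = mat 1"
| "mat_pow A (Suc k) = A ** mat_pow A k"

definition poly_mat :: "'a::comm_ring_1 poly \<Rightarrow> 'a^'n^'n \<Rightarrow> 'a^'n^'n" where
  "poly_mat p A = (\<Sum>i\<le>degree p. mat (coeff p i) ** mat_pow A i)"

definition map_matrix :: "('a \<Rightarrow> 'b) \<Rightarrow> 'a^'n^'n \<Rightarrow> 'b^'n^'n" where
  "map_matrix h A = (\<chi> i j. h (A $ i $ j))"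

definition map_vector :: "('a \<Rightarrow> 'b) \<Rightarrow> 'a^'n \<Rightarrow> 'b^'n" where
  "map_vector h x = (\<chi> i. h (x $ i))"

text \<open>Cyclic vector: (v, v M^t, ..., v (M^t)^(n-1)) is a basis of K^n, n = CARD('n).
  Row vector v M^t corresponds to the column vector M *v v.\<close>
definition cyclic_vector :: "'k::field^'n^'n \<Rightarrow> 'k^'n \<Rightarrow> bool" where
  "cyclic_vector M v \<longleftrightarrow>
     (let B = (\<lambda>i. mat_pow M i *v v) ` {..<CARD('n)} in
       card B = CARD('n) \<and> vec.independent B \<and> vec.span B = UNIV)"

definition cyclic_matrix :: "'k::field^'n^'n \<Rightarrow> bool" where
  "cyclic_matrix M \<longleftrightarrow> (\<exists>v. cyclic_vector M v)"

definition is_min_poly :: "'k::field^'n^'n \<Rightarrow> 'k poly \<Rightarrow> bool" where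
  "is_min_poly M f \<longleftrightarrow> lead_coeff f = 1 \<and> poly_mat f M = 0 \<and>
     (\<forall>p. poly_mat p M = 0 \<longrightarrow> f dvd p)"

text \<open>The M-cyclic code C_g = { v g(M)^t P(M)^t : P in L[x] } (row vectors), written
  with column vectors as (P(M) g(M)) v, for the cyclic vector v in K^n.\<close>
definition cyclic_code ::
  "('k::field \<Rightarrow> 'l::field) \<Rightarrow> 'k^'n^'n \<Rightarrow> 'k^'n \<Rightarrow> 'l poly \<Rightarrow> ('l^'n) set" where
  "cyclic_code emb M v g =
     {(poly_mat P (map_matrix emb M) ** poly_mat g (map_matrix emb M)) *v map_vector emb v
       | P. True}"

text \<open>Rank weight: K-dimension of the K-span of the entries.\<close>
definition rank_weight :: "('k::field \<Rightarrow> 'l::field) \<Rightarrow> 'l^'n \<Rightarrow> nat" where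
  "rank_weight emb c =
     vector_space.dim (ext_scale emb) (module.span (ext_scale emb) (range (\<lambda>i. c $ i)))"

definition first_gen_rank_weight :: "('k::field \<Rightarrow> 'l::field) \<Rightarrow> ('l^'n) set \<Rightarrow> nat" where
  "first_gen_rank_weight emb C = Min {rank_weight emb c | c. c \<in> C \<and> c \<noteq> 0}"

end

theory Submission imports Defs begin

section \<open>Bezout-style coprimality in commutative rings\<close>

definition bez :: "'a::comm_ring_1 \<Rightarrow> 'a \<Rightarrow> bool" where
  "bez a b \<longleftrightarrow> (\<exists>u w. u * a + w * b = 1)"

lemma bez_sym: "bez a b \<Longrightarrow> bez b a"
  unfolding bez_def by (metis add.commute)

lemma bez_mult_left:
  assumes "bez a b" "bez a' b" shows "bez (a * a') b"
proof -
  obtain u w where 1: "u * a + w * b = 1" using assms(1) bez_def by blast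
  obtain u' w' where 2: "u' * a' + w' * b = 1" using assms(2) bez_def by blast
  have "(u * a + w * b) * (u' * a' + w' * b) = 1" using 1 2 by simp
  hence "(u * u') * (a * a') + (u * a * w' + w * (u' * a' + w' * b)) * b = 1"
    by (simp add: algebra_simps)
  thus ?thesis unfolding bez_def by blast
qed

lemma bez_one_left: "bez 1 b"
  unfolding bez_def by (rule exI[of _ 1], rule exI[of _ 0]) simp

lemma bez_power_left: "bez a b \<Longrightarrow> bez (a ^ m) b"
  by (induction m) (auto simp: bez_one_left bez_mult_left)

lemma bez_prod_left: "finite A \<Longrightarrow> (\<And>i. i \<in> A \<Longrightarrow> bez (f i) b) \<Longrightarrow> bez (prod f A) b"
  by (induction A rule: finite_induct) (auto simp: bez_one_left bez_mult_left)

lemma bez_dvd: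
  assumes "bez a b" "a' dvd a" "b' dvd b" shows "bez a' b'"
proof -
  obtain u w where 1: "u * a + w * b = 1" using assms(1) bez_def by blast
  obtain k where k: "a = a' * k" using assms(2) by blast
  obtain j where j: "b = b' * j" using assms(3) by blast
  have "(u * k) * a' + (w * j) * b' = 1" using 1 k j by (simp add: algebra_simps)
  thus ?thesis unfolding bez_def by blast
qed

lemma bez_dvd_mult:
  assumes "bez a c" "a dvd b * c" shows "a dvd b"
proof -
  obtain u w where 1: "u * a + w * c = 1" using assms(1) bez_def by blast
  have "b = (u * b) * a + w * (b * c)" using 1
    by (metis (no_types, lifting) distrib_left mult.commute mult.left_commute mult.right_neutral)
  also have "a dvd \<dots>" using assms(2) by simp
  finally show ?thesis .
qed

lemma bez_mult_dvd:
  assumes "bez a b" "a dvd x" "b dvd x" shows "a * b dvd x"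
proof -
  obtain u w where 1: "u * a + w * b = 1" using assms(1) bez_def by blast
  obtain y where y: "x = a * y" using assms(2) by blast
  obtain z where z: "x = b * z" using assms(3) by blast
  have "x = u * (a * x) + w * (b * x)" using 1
    by (metis (no_types, lifting) distrib_right mult.assoc mult_1)
  also have "\<dots> = (a * b) * (u * z + w * y)" using y z by (simp add: algebra_simps)
  finally show ?thesis by (metis dvdI)
qed

lemma bez_common_unit:
  assumes "bez a b" "c dvd a" "c dvd b" shows "c dvd 1"
proof -
  obtain u w where 1: "u * a + w * b = 1" using assms(1) bez_def by blast
  have "c dvd u * a + w * b" using assms(2,3) by simp
  thus ?thesis using 1 by simp
qed

lemma prod_dvd_iff_bez:
  fixes a :: "nat \<Rightarrow> 'a::comm_ring_1"
  assumes "\<And>i j. i < s \<Longrightarrow> j < s \<Longrightarrow> i \<noteq> j \<Longrightarrow> bez (a i) (a j)"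
  shows "(\<Prod>i<s. a i) dvd x \<longleftrightarrow> (\<forall>i<s. a i dvd x)"
  using assms
proof (induction s)
  case 0 then show ?case by simp
next
  case (Suc s)
  have IH: "(\<Prod>i<s. a i) dvd x \<longleftrightarrow> (\<forall>i<s. a i dvd x)" using Suc by auto
  have b: "bez (\<Prod>i<s. a i) (a s)"
    by (rule bez_prod_left) (use Suc.prems in auto)
  show ?case
  proof
    assume "(\<Prod>i<Suc s. a i) dvd x"
    hence "(\<Prod>i<s. a i) * a s dvd x" by simp
    hence "(\<Prod>i<s. a i) dvd x" "a s dvd x" by (auto intro: dvd_mult_left dvd_mult_right)
    thus "\<forall>i<Suc s. a i dvd x" using IH less_Suc_eq by auto
  next
    assume "\<forall>i<Suc s. a i dvd x"
    hence "(\<Prod>i<s. a i) dvd x" "a s dvd x" using IH by auto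
    thus "(\<Prod>i<Suc s. a i) dvd x" using bez_mult_dvd[OF b] by simp
  qed
qed

section \<open>Polynomials over a field\<close>

lemma coprime_bez_poly:
  fixes a b :: "'a::field poly"
  assumes cd: "\<And>c. c dvd a \<Longrightarrow> c dvd b \<Longrightarrow> c dvd 1" and b0: "b \<noteq> 0"
  shows "bez a b"
proof -
  define I where "I = {u * a + w * b | u w. True}"
  have bI: "b \<in> I" unfolding I_def by (metis (mono_tags, lifting) add_0 mem_Collect_eq mult_1 mult_zero_left)
  have aI: "a \<in> I" unfolding I_def by (metis (mono_tags, lifting) add_0_right mem_Collect_eq mult_1 mult_zero_left)
  obtain d where d: "d \<in> I \<and> d \<noteq> 0" and dmin: "\<And>e. e \<in> I \<and> e \<noteq> 0 \<Longrightarrow> degree d \<le> degree e"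
    using ex_has_least_nat[of "\<lambda>e. e \<in> I \<and> e \<noteq> 0" b degree] bI b0 by blast
  have dvdI: "d dvd x" if "x \<in> I" for x
  proof -
    obtain u w where x: "x = u * a + w * b" using \<open>x \<in> I\<close> I_def by blast
    obtain u' w' where dd: "d = u' * a + w' * b" using d I_def by blast
    have "x mod d = x - (x div d) * d" by (simp add: minus_div_mult_eq_mod)
    also have "\<dots> = (u - x div d * u') * a + (w - x div d * w') * b"
      by (simp add: x dd algebra_simps)
    finally have "x mod d \<in> I" unfolding I_def by blast
    moreover have "x mod d = 0 \<or> degree (x mod d) < degree d"
      using degree_mod_less d by blast
    ultimately have "x mod d = 0" using dmin by force
    thus ?thesis by (simp add: mod_eq_0_iff_dvd)
  qed
  have "d dvd 1" using cd dvdI aI bI by blast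
  then obtain e where e: "1 = d * e" by blast
  obtain u' w' where dd: "d = u' * a + w' * b" using d I_def by blast
  have "(e * u') * a + (e * w') * b = 1" using e dd by (simp add: algebra_simps)
  thus ?thesis unfolding bez_def by blast
qed

lemma irreducible_bez_poly:
  fixes p r :: "'a::field poly"
  assumes irr: "irreducible p" and nd: "\<not> p dvd r"
  shows "bez p r"
proof (rule coprime_bez_poly)
  show "r \<noteq> 0" using nd by auto
  fix c assume c: "c dvd p" "c dvd r"
  then obtain e where e: "p = c * e" by blast
  from irreducibleD[OF irr e] show "c dvd 1"
  proof
    assume "e dvd 1"
    then obtain e' where "1 = e * e'" by blast
    hence "c = p * e'" using e by (metis mult.assoc mult_1_right)
    hence "p dvd c" by simp
    hence "p dvd r" using c dvd_trans by blast
    with nd show ?thesis by simp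
  qed
qed

lemma poly_decompose:
  fixes p h :: "'a::field poly"
  assumes p0: "p \<noteq> 0" and pu: "\<not> p dvd 1" and h0: "h \<noteq> 0"
  shows "\<exists>k r. h = p ^ k * r \<and> \<not> p dvd r"
  using h0
proof (induction "degree h" arbitrary: h rule: less_induct)
  case less
  show ?case
  proof (cases "p dvd h")
    case False
    then show ?thesis by (rule_tac x=0 in exI, rule_tac x=h in exI) simp
  next
    case True
    then obtain h' where h': "h = p * h'" by blast
    with less.prems have h'0: "h' \<noteq> 0" by auto
    have "degree p > 0" using is_unit_iff_degree[OF p0] pu by simp
    hence "degree h' < degree h" using h' degree_mult_eq[OF p0 h'0] by simp
    from less.hyps[OF this h'0] obtain k r where "h' = p ^ k * r" "\<not> p dvd r" by blast
    thus ?thesis using h' by (rule_tac x="Suc k" in exI, rule_tac x=r in exI) (simp add: mult.assoc)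
  qed
qed

lemma monic_unit_eq_1:
  fixes g :: "'a::field poly"
  assumes "lead_coeff g = 1" "g dvd 1" shows "g = 1"
proof -
  have g0: "g \<noteq> 0" using assms by auto
  hence "degree g = 0" using is_unit_iff_degree assms by blast
  thus ?thesis using assms(1) by (metis degree_eq_zeroE lead_coeff_pCons(2) one_poly_eq_simps(1) pCons_0_0)
qed

lemma irreducible_degree_pos:
  fixes p :: "'a::field poly"
  assumes "irreducible p" shows "degree p > 0"
  using assms is_unit_iff_degree irreducible_def by auto

lemma distinct_monic_irreducible_bez:
  fixes p q :: "'a::field poly"
  assumes "irreducible p" "irreducible q" "lead_coeff p = 1" "lead_coeff q = 1" "p \<noteq> q"
  shows "bez p q"
proof (rule irreducible_bez_poly[OF assms(1)])
  show "\<not> p dvd q"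
  proof
    assume "p dvd q"
    then obtain e where e: "q = p * e" by blast
    from irreducibleD[OF assms(2) e] show False
    proof
      assume "p dvd 1" thus False using assms(1) irreducible_def by blast
    next
      assume eu: "e dvd 1"
      have e0: "e \<noteq> 0" using e assms(2) irreducible_def by auto
      hence "degree e = 0" using is_unit_iff_degree eu by blast
      have "lead_coeff q = lead_coeff p * lead_coeff e" using e by (simp add: lead_coeff_mult)
      hence "lead_coeff e = 1" using assms by simp
      hence "e = 1" using monic_unit_eq_1 eu by blast
      thus False using e assms(5) by simp
    qed
  qed
qed


section \<open>Field embeddings\<close>

context
  fixes emb :: "'k::field \<Rightarrow> 'l::field"
  assumes hom: "is_field_emb emb"
begin

lemma emb_add: "emb (a + b) = emb a + emb b"
  using hom unfolding is_field_emb_def by blast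

lemma emb_mult: "emb (a * b) = emb a * emb b"
  using hom unfolding is_field_emb_def by blast

lemma emb_1: "emb 1 = 1"
  using hom unfolding is_field_emb_def by blast

lemma emb_0: "emb 0 = 0"
proof -
  have "emb 0 + emb 0 = emb 0 + 0" using emb_add[of 0 0] by simp
  thus ?thesis by (rule add_left_imp_eq)
qed

lemma emb_inj: "emb a = emb b \<longleftrightarrow> a = b"
  using hom unfolding is_field_emb_def inj_def by blast

lemma emb_eq_0: "emb a = 0 \<longleftrightarrow> a = 0"
  using emb_inj[of a 0] emb_0 by simp

lemma emb_sum: "emb (\<Sum>i\<in>A. f i) = (\<Sum>i\<in>A. emb (f i))"
  by (induction A rule: infinite_finite_induct) (auto simp: emb_0 emb_add)

lemma emb_uminus: "emb (- a) = - emb a"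
proof -
  have "emb a + emb (- a) = 0" using emb_add[of a "-a"] emb_0 by simp
  thus ?thesis by (simp add: eq_neg_iff_add_eq_0 add.commute)
qed

lemma map_poly_add_h: "map_poly emb (p + q) = map_poly emb p + map_poly emb q"
  by (intro poly_eqI) (simp add: coeff_map_poly emb_0 emb_add)

lemma map_poly_uminus_h: "map_poly emb (- p) = - map_poly emb p"
  by (intro poly_eqI) (simp add: coeff_map_poly emb_0 emb_uminus)

lemma map_poly_diff_h: "map_poly emb (p - q) = map_poly emb p - map_poly emb q"
  using map_poly_add_h[of p "-q"] map_poly_uminus_h[of q] by simp

lemma map_poly_smult_h: "map_poly emb (smult c p) = smult (emb c) (map_poly emb p)"
  by (rule map_poly_smult) (auto simp: emb_0 emb_mult)

lemma map_poly_mult_h: "map_poly emb (p * q) = map_poly emb p * map_poly emb q"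
proof (induction p)
  case 0 then show ?case by simp
next
  case (pCons a p)
  have "map_poly emb (pCons a p * q) = map_poly emb (smult a q + pCons 0 (p * q))" by simp
  also have "\<dots> = smult (emb a) (map_poly emb q) + pCons 0 (map_poly emb p * map_poly emb q)"
    by (simp add: map_poly_add_h map_poly_smult_h map_poly_pCons emb_0 pCons.IH)
  also have "\<dots> = map_poly emb (pCons a p) * map_poly emb q"
    by (simp add: map_poly_pCons emb_0)
  finally show ?case .
qed

lemma map_poly_1_h: "map_poly emb 1 = 1"
  by (simp add: emb_1)

lemma map_poly_power_h: "map_poly emb (p ^ k) = map_poly emb p ^ k"
  by (induction k) (simp_all add: map_poly_1_h map_poly_mult_h)

lemma map_poly_const_h: "map_poly emb [:c:] = [:emb c:]"
  by (simp add: map_poly_pCons emb_0)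

lemma map_poly_dvd_h: "p dvd q \<Longrightarrow> map_poly emb p dvd map_poly emb q"
  by (metis dvd_def map_poly_mult_h)

lemma degree_map_poly_h: "degree (map_poly emb p) = degree p"
  by (rule degree_map_poly) (simp add: emb_eq_0)

lemma map_poly_eq_0_h: "map_poly emb p = 0 \<longleftrightarrow> p = 0"
  by (rule map_poly_eq_0_iff) (auto simp: emb_0 emb_eq_0)

lemma bez_map: "bez a b \<Longrightarrow> bez (map_poly emb a) (map_poly emb b)"
proof -
  assume "bez a b"
  then obtain u w where "u * a + w * b = 1" unfolding bez_def by blast
  hence "map_poly emb (u * a + w * b) = 1" by (simp add: map_poly_1_h)
  hence "map_poly emb u * map_poly emb a + map_poly emb w * map_poly emb b = 1"
    by (simp add: map_poly_add_h map_poly_mult_h)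
  thus ?thesis unfolding bez_def by blast
qed

lemma part1:
  fixes fs :: "nat \<Rightarrow> 'k poly" and gs :: "nat \<Rightarrow> 'l poly"
  assumes fs_irr: "\<And>i. i < s \<Longrightarrow> lead_coeff (fs i) = 1 \<and> irreducible (fs i)"
    and fs_dist: "\<And>i j. i < s \<Longrightarrow> j < s \<Longrightarrow> i \<noteq> j \<Longrightarrow> fs i \<noteq> fs j"
    and ms_pos: "\<And>i. i < s \<Longrightarrow> ms i \<ge> 1"
    and g_fact: "g = (\<Prod>i<s. gs i)"
    and gs_monic: "\<And>i. i < s \<Longrightarrow> lead_coeff (gs i) = 1"
    and gs_dvd: "\<And>i. i < s \<Longrightarrow> gs i dvd map_poly emb (fs i ^ ms i)"
    and l_def: "\<And>i. i < s \<Longrightarrow> l i = (if gs i = 1 then 0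
                  else (LEAST k. 1 \<le> k \<and> k \<le> ms i \<and> gs i dvd map_poly emb (fs i ^ k)))"
  shows "g dvd map_poly emb h \<longleftrightarrow> (\<Prod>i<s. fs i ^ l i) dvd h"
    and "\<And>i. i < s \<Longrightarrow> l i \<le> ms i"
proof -
  have gl: "l i \<le> ms i \<and> gs i dvd map_poly emb (fs i ^ l i)" if i: "i < s" for i
  proof (cases "gs i = 1")
    case True then show ?thesis using l_def[OF i] by simp
  next
    case False
    let ?P = "\<lambda>k. 1 \<le> k \<and> k \<le> ms i \<and> gs i dvd map_poly emb (fs i ^ k)"
    have "?P (ms i)" using ms_pos[OF i] gs_dvd[OF i] by simp
    hence "?P (LEAST k. ?P k)" by (rule LeastI)
    thus ?thesis using l_def[OF i] False by simp
  qed
  thus "\<And>i. i < s \<Longrightarrow> l i \<le> ms i" by blast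
  have key: "gs i dvd map_poly emb h \<longleftrightarrow> fs i ^ l i dvd h" if i: "i < s" for i
  proof
    assume "fs i ^ l i dvd h"
    hence "map_poly emb (fs i ^ l i) dvd map_poly emb h" by (rule map_poly_dvd_h)
    with gl[OF i] show "gs i dvd map_poly emb h" using dvd_trans by metis
  next
    assume gd: "gs i dvd map_poly emb h"
    show "fs i ^ l i dvd h"
    proof (cases "h = 0")
      case True then show ?thesis by simp
    next
      case False
      have irr: "irreducible (fs i)" using fs_irr[OF i] by blast
      hence f0: "fs i \<noteq> 0" and fu: "\<not> fs i dvd 1" unfolding irreducible_def by blast+
      obtain k r where hk: "h = fs i ^ k * r" and nd: "\<not> fs i dvd r"
        using poly_decompose[OF f0 fu False] by blast
      have "bez (fs i ^ ms i) r" using bez_power_left[OF irreducible_bez_poly[OF irr nd]] .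
      hence "bez (map_poly emb (fs i ^ ms i)) (map_poly emb r)" by (rule bez_map)
      hence b: "bez (gs i) (map_poly emb r)" using bez_dvd gs_dvd[OF i] dvd_refl by metis
      have "gs i dvd map_poly emb (fs i ^ k) * map_poly emb r" using gd hk by (simp add: map_poly_mult_h)
      hence gk: "gs i dvd map_poly emb (fs i ^ k)" using bez_dvd_mult[OF b] by blast
      have "l i \<le> k"
      proof (rule ccontr)
        assume kl: "\<not> l i \<le> k"
        hence g1: "gs i \<noteq> 1" using l_def[OF i] by auto
        show False
        proof (cases "k = 0")
          case True
          hence "gs i dvd 1" using gk by (simp add: map_poly_1_h)
          thus False using monic_unit_eq_1 gs_monic[OF i] g1 by blast
        next
          case False
          let ?P = "\<lambda>k. 1 \<le> k \<and> k \<le> ms i \<and> gs i dvd map_poly emb (fs i ^ k)"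
          have "?P k" using False kl gl[OF i] gk by auto
          hence "(LEAST k. ?P k) \<le> k" by (rule Least_le)
          thus False using kl l_def[OF i] g1 by simp
        qed
      qed
      hence "fs i ^ l i dvd fs i ^ k" by (rule le_imp_power_dvd)
      thus ?thesis using hk by (simp add: dvd_mult2)
    qed
  qed
  have fb: "bez (fs i ^ a) (fs j ^ b)" if "i < s" "j < s" "i \<noteq> j" for i j a b
  proof -
    have "bez (fs i) (fs j)"
      using distinct_monic_irreducible_bez[of "fs i" "fs j"] fs_irr[OF that(1)] fs_irr[OF that(2)]
        fs_dist[OF that] by simp
    hence "bez (fs i ^ a) (fs j)" by (rule bez_power_left)
    hence "bez (fs j ^ b) (fs i ^ a)" by (rule bez_power_left[OF bez_sym])
    thus ?thesis by (rule bez_sym)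
  qed
  have gb: "bez (gs i) (gs j)" if "i < s" "j < s" "i \<noteq> j" for i j
    using bez_dvd[OF bez_map[OF fb[OF that]] gs_dvd[OF that(1)] gs_dvd[OF that(2)]] .
  have "g dvd map_poly emb h \<longleftrightarrow> (\<forall>i<s. gs i dvd map_poly emb h)"
    unfolding g_fact by (rule prod_dvd_iff_bez) (rule gb)
  also have "\<dots> \<longleftrightarrow> (\<forall>i<s. fs i ^ l i dvd h)" using key by blast
  also have "\<dots> \<longleftrightarrow> (\<Prod>i<s. fs i ^ l i) dvd h"
    by (rule prod_dvd_iff_bez[symmetric]) (rule fb)
  finally show "g dvd map_poly emb h \<longleftrightarrow> (\<Prod>i<s. fs i ^ l i) dvd h" .
qed

end


section \<open>Polynomials evaluated at matrices\<close>

lemma mat_add_gen: "(mat (a + b) :: 'a::semiring_1^'n^'n) = mat a + mat b"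
  by (simp add: vec_eq_iff mat_def)

lemma mat_mul_comp: "(mat c ** X) $ i $ j = c * X $ i $ j"
  for X :: "'a::semiring_1^'m^'n"
  by (simp add: matrix_matrix_mult_def mat_def if_distrib if_distribR sum.delta cong: if_cong)

lemma mul_mat_comp: "(X ** mat c) $ i $ j = X $ i $ j * c"
  for X :: "'a::semiring_1^'m^'n"
  by (simp add: matrix_matrix_mult_def mat_def if_distrib if_distribR sum.delta' cong: if_cong)

lemma mat_comm: "mat c ** X = X ** mat c"
  for X :: "'a::comm_semiring_1^'n^'n"
  by (simp add: vec_eq_iff mat_mul_comp mul_mat_comp mult.commute)

lemma mat_mul_mat: "mat a ** mat b = (mat (a * b) :: 'a::semiring_1^'n^'n)"
  by (simp add: vec_eq_iff mat_mul_comp) (simp add: mat_def)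

lemma matrix_add_rdistrib_gen: "(A + B) ** C = A ** C + B ** C"
  for A B :: "'a::semiring_1^'m^'n"
  by (vector matrix_matrix_mult_def sum.distrib[symmetric] field_simps)

lemma matrix_sum_rmul: "(\<Sum>i\<in>S. f i) ** C = (\<Sum>i\<in>S. f i ** C)"
  for f :: "'b \<Rightarrow> 'a::semiring_1^'m^'n"
  by (induction S rule: infinite_finite_induct) (auto simp: matrix_add_rdistrib_gen)

lemma matrix_sum_lmul: "C ** (\<Sum>i\<in>S. f i) = (\<Sum>i\<in>S. C ** f i)"
  for f :: "'b \<Rightarrow> 'a::semiring_1^'m^'n"
  by (induction S rule: infinite_finite_induct) (auto simp: matrix_add_ldistrib)

lemma matrix_sum_vmul: "(\<Sum>i\<in>S. f i) *v x = (\<Sum>i\<in>S. f i *v x)"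
  for f :: "'b \<Rightarrow> 'a::semiring_1^'m^'n"
  by (induction S rule: infinite_finite_induct) (auto simp: matrix_vector_mult_add_rdistrib)

lemma mat_vec: "mat c *v x = c *s x"
  for x :: "'a::semiring_1^'n"
  by (simp add: vec_eq_iff matrix_vector_mult_def mat_def if_distrib if_distribR sum.delta cong: if_cong)

lemma mat_scalar_assoc: "mat c ** (A ** B) = A ** (mat c ** B)"
  for A B :: "'a::comm_semiring_1^'n^'n"
  by (metis mat_comm matrix_mul_assoc)

lemma mat_pow_comm: "A ** mat_pow A k = mat_pow A k ** A"
  by (induction k) (simp_all add: matrix_mul_assoc)

lemma poly_mat_alt:
  fixes A :: "'a::comm_ring_1^'n^'n"
  assumes "degree p < N"
  shows "poly_mat p A = (\<Sum>i<N. mat (coeff p i) ** mat_pow A i)"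
proof -
  have "poly_mat p A = (\<Sum>i<Suc (degree p). mat (coeff p i) ** mat_pow A i)"
    unfolding poly_mat_def by (simp add: lessThan_Suc_atMost)
  also have "\<dots> = (\<Sum>i<N. mat (coeff p i) ** mat_pow A i)"
    by (rule sum.mono_neutral_left) (use assms in \<open>auto simp: coeff_eq_0\<close>)
  finally show ?thesis .
qed

lemma poly_mat_0: "poly_mat 0 A = 0"
  by (simp add: poly_mat_def)

lemma poly_mat_add: "poly_mat (p + q) A = poly_mat p A + poly_mat q A"
proof -
  define N where "N = Suc (max (degree p) (degree q))"
  have "degree (p + q) < N" unfolding N_def using degree_add_le_max[of p q] by simp
  moreover have "degree p < N" "degree q < N" unfolding N_def by auto
  ultimately show ?thesis
    by (simp add: poly_mat_alt mat_add_gen matrix_add_rdistrib_gen sum.distrib)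
qed

lemma poly_mat_smult: "poly_mat (smult c p) A = mat c ** poly_mat p A"
proof -
  have "degree (smult c p) < Suc (degree p)" by (rule le_imp_less_Suc[OF degree_smult_le])
  hence "poly_mat (smult c p) A = (\<Sum>i<Suc (degree p). mat (coeff (smult c p) i) ** mat_pow A i)"
    by (rule poly_mat_alt)
  also have "\<dots> = (\<Sum>i<Suc (degree p). mat c ** (mat (coeff p i) ** mat_pow A i))"
    by (simp only: coeff_smult matrix_mul_assoc mat_mul_mat)
  also have "\<dots> = mat c ** (\<Sum>i<Suc (degree p). mat (coeff p i) ** mat_pow A i)"
    by (simp only: matrix_sum_lmul)
  also have "\<dots> = mat c ** poly_mat p A" by (simp only: poly_mat_alt[of p "Suc (degree p)"] lessI)
  finally show ?thesis .
qed

lemma poly_mat_const: "poly_mat [:c:] A = mat c"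
  by (simp add: poly_mat_def)

lemma poly_mat_1: "poly_mat 1 A = mat 1"
  by (simp add: poly_mat_def)

lemma poly_mat_pCons0: "poly_mat (pCons 0 p) A = A ** poly_mat p A"
proof -
  define N where "N = Suc (degree p)"
  have d1: "degree (pCons 0 p) < Suc N" unfolding N_def
    by (metis degree_pCons_le le_imp_less_Suc)
  have d2: "degree p < N" unfolding N_def by simp
  have "poly_mat (pCons 0 p) A = (\<Sum>i<Suc N. mat (coeff (pCons 0 p) i) ** mat_pow A i)"
    by (rule poly_mat_alt[OF d1])
  also have "\<dots> = (\<Sum>i<N. mat (coeff p i) ** (A ** mat_pow A i))"
    by (subst sum.lessThan_Suc_shift) simp
  also have "\<dots> = A ** (\<Sum>i<N. mat (coeff p i) ** mat_pow A i)"
    by (simp add: matrix_sum_lmul mat_scalar_assoc)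
  also have "\<dots> = A ** poly_mat p A" by (simp add: poly_mat_alt[OF d2])
  finally show ?thesis .
qed

lemma pCons_split: "pCons a p = [:a:] + pCons 0 p"
  by (simp add: poly_eq_iff coeff_pCons split: nat.splits)

lemma poly_mat_pCons: "poly_mat (pCons a p) A = mat a + A ** poly_mat p A"
proof -
  have "poly_mat (pCons a p) A = poly_mat ([:a:] + pCons 0 p) A" using pCons_split by metis
  thus ?thesis by (simp only: poly_mat_add poly_mat_const poly_mat_pCons0)
qed

lemma poly_mat_mult: "poly_mat (p * q) A = poly_mat p A ** poly_mat q A"
proof (induction p)
  case 0 then show ?case by (simp add: poly_mat_0)
next
  case (pCons a p)
  have "poly_mat (pCons a p * q) A = mat a ** poly_mat q A + A ** (poly_mat p A ** poly_mat q A)"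
    by (simp add: poly_mat_add poly_mat_smult poly_mat_pCons0 pCons.IH)
  also have "\<dots> = poly_mat (pCons a p) A ** poly_mat q A"
    by (simp add: poly_mat_pCons matrix_add_rdistrib_gen matrix_mul_assoc)
  finally show ?case .
qed

lemma poly_mat_X: "poly_mat [:0, 1:] A = A"
  by (simp add: poly_mat_pCons0 poly_mat_const)

lemma poly_mat_comm: "poly_mat p A ** poly_mat q A = poly_mat q A ** poly_mat p A"
  by (metis poly_mat_mult mult.commute)

lemma poly_mat_comm_A: "poly_mat p A ** A = A ** poly_mat p A"
  by (metis poly_mat_comm poly_mat_X)

lemma poly_mat_diff: "poly_mat (p - q) A = poly_mat p A - poly_mat q A"
  by (metis add_diff_cancel poly_mat_add diff_add_cancel)

lemma poly_mat_vec:
  fixes A :: "'a::comm_ring_1^'n^'n"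
  assumes "degree p < N"
  shows "poly_mat p A *v x = (\<Sum>i<N. coeff p i *s (mat_pow A i *v x))"
  by (simp add: poly_mat_alt[OF assms] matrix_sum_vmul matrix_vector_mul_assoc[symmetric] mat_vec)

lemma poly_mat_monom_vec: "poly_mat (monom c k) A *v x = c *s (mat_pow A k *v x)"
proof -
  have "degree (monom c k) < Suc k" by (simp add: degree_monom_le le_imp_less_Suc)
  hence "poly_mat (monom c k) A *v x = (\<Sum>i<Suc k. coeff (monom c k) i *s (mat_pow A i *v x))"
    by (rule poly_mat_vec)
  also have "\<dots> = c *s (mat_pow A k *v x)"
    by (simp add: coeff_monom sum.delta' if_distrib if_distribR cong: if_cong)
  finally show ?thesis .
qed


section \<open>Mapping matrices and vectors along an embedding\<close>

context
  fixes emb :: "'k::field \<Rightarrow> 'l::field"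
  assumes hom: "is_field_emb emb"
begin

lemma mm_comp: "map_matrix emb A $ i $ j = emb (A $ i $ j)"
  by (simp add: map_matrix_def)

lemma mv_comp: "map_vector emb x $ i = emb (x $ i)"
  by (simp add: map_vector_def)

lemma mm_mul: "map_matrix emb (A ** B) = map_matrix emb A ** map_matrix emb B"
  by (simp add: vec_eq_iff mm_comp matrix_matrix_mult_def emb_sum[OF hom] emb_mult[OF hom])

lemma mm_add: "map_matrix emb (A + B) = map_matrix emb A + map_matrix emb B"
  by (simp add: vec_eq_iff mm_comp emb_add[OF hom])

lemma mm_zero: "map_matrix emb 0 = 0"
  by (simp add: vec_eq_iff mm_comp emb_0[OF hom])

lemma mm_mat: "map_matrix emb (mat c) = mat (emb c)"
  by (simp add: vec_eq_iff mm_comp mat_def emb_0[OF hom])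

lemma mm_sum: "map_matrix emb (\<Sum>i\<in>S. f i) = (\<Sum>i\<in>S. map_matrix emb (f i))"
  by (induction S rule: infinite_finite_induct) (auto simp: mm_zero mm_add)

lemma mm_pow: "map_matrix emb (mat_pow A k) = mat_pow (map_matrix emb A) k"
  by (induction k) (simp_all add: mm_mat emb_1[OF hom] mm_mul)

lemma mm_poly: "map_matrix emb (poly_mat p A) = poly_mat (map_poly emb p) (map_matrix emb A)"
proof -
  have d: "degree p < Suc (degree p)" "degree (map_poly emb p) < Suc (degree p)"
    by (simp_all add: degree_map_poly_h[OF hom])
  show ?thesis
    unfolding poly_mat_alt[OF d(1)] poly_mat_alt[OF d(2)] mm_sum mm_mul mm_mat mm_pow
    by (simp add: coeff_map_poly emb_0[OF hom])
qed

lemma mv_mul: "map_vector emb (A *v x) = map_matrix emb A *v map_vector emb x"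
  by (simp add: vec_eq_iff mm_comp mv_comp matrix_vector_mult_def emb_sum[OF hom] emb_mult[OF hom])

lemma mv_add: "map_vector emb (x + y) = map_vector emb x + map_vector emb y"
  by (simp add: vec_eq_iff mv_comp emb_add[OF hom])

lemma mv_zero: "map_vector emb 0 = 0"
  by (simp add: vec_eq_iff mv_comp emb_0[OF hom])

lemma mv_scale: "map_vector emb (c *s x) = emb c *s map_vector emb x"
  by (simp add: vec_eq_iff mv_comp emb_mult[OF hom])

lemma mv_sum: "map_vector emb (\<Sum>i\<in>S. f i) = (\<Sum>i\<in>S. map_vector emb (f i))"
  by (induction S rule: infinite_finite_induct) (auto simp: mv_zero mv_add)

lemma mv_inj: "map_vector emb x = map_vector emb y \<longleftrightarrow> x = y"
  by (simp add: vec_eq_iff mv_comp emb_inj[OF hom])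

lemma mv_eq_0: "map_vector emb x = 0 \<longleftrightarrow> x = 0"
  using mv_inj[of x 0] mv_zero by metis

end


section \<open>Cyclic vectors\<close>

lemma cyc_indep:
  fixes A :: "'a::field^'n^'n" and x :: "'a^'n"
  assumes inj: "inj_on (\<lambda>i. mat_pow A i *v x) {..<n}"
    and ind: "vec.independent ((\<lambda>i. mat_pow A i *v x) ` {..<n})"
    and dh: "degree h < n" and hz: "poly_mat h A *v x = 0"
  shows "h = 0"
proof -
  define b where "b = (\<lambda>i. mat_pow A i *v x)"
  define B where "B = b ` {..<n}"
  have fin: "finite B" unfolding B_def by simp
  define u where "u w = coeff h (the_inv_into {..<n} b w)" for w
  have "(\<Sum>w\<in>B. u w *s w) = (\<Sum>i<n. u (b i) *s b i)"
    unfolding B_def using inj unfolding b_def[symmetric] by (simp add: sum.reindex)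
  also have "\<dots> = (\<Sum>i<n. coeff h i *s b i)"
    using inj unfolding b_def[symmetric] u_def by (simp add: the_inv_into_f_f)
  also have "\<dots> = poly_mat h A *v x" unfolding b_def by (simp add: poly_mat_vec[OF dh])
  finally have "(\<Sum>w\<in>B. u w *s w) = 0" using hz by simp
  hence "\<forall>w\<in>B. u w = 0" using ind vec.dependent_finite[OF fin] unfolding B_def b_def by blast
  hence "coeff h i = 0" if "i < n" for i
    using that inj unfolding u_def B_def b_def[symmetric] by (auto simp: the_inv_into_f_f)
  moreover have "coeff h i = 0" if "\<not> i < n" for i using that dh by (simp add: coeff_eq_0)
  ultimately show ?thesis by (metis leading_coeff_0_iff)
qed

lemma cyc_span:
  fixes A :: "'a::field^'n^'n" and x :: "'a^'n"
  assumes inj: "inj_on (\<lambda>i. mat_pow A i *v x) {..<n}"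
    and sp: "vec.span ((\<lambda>i. mat_pow A i *v x) ` {..<n})= UNIV" and n0: "0 < n"
  shows "\<exists>h. degree h < n \<and> w = poly_mat h A *v x"
proof -
  define b where "b = (\<lambda>i. mat_pow A i *v x)"
  define B where "B = b ` {..<n}"
  have fin: "finite B" unfolding B_def by simp
  have "w \<in> vec.span B" using sp unfolding B_def b_def by simp
  then obtain u where u: "w = (\<Sum>v\<in>B. u v *s v)" using vec.span_finite[OF fin] by auto
  define h where "h = Poly (map (\<lambda>i. u (b i)) [0..<n])"
  have ch: "coeff h i = (if i < n then u (b i) else 0)" for i
    unfolding h_def by (simp add: nth_default_def)
  have dh: "degree h < n"
  proof -
    have "degree h \<le> n - 1" by (rule degree_le) (auto simp: ch)
    thus ?thesis using n0 by simp
  qed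
  have "w = (\<Sum>i<n. u (b i) *s b i)"
    unfolding u B_def using inj unfolding b_def[symmetric] by (simp add: sum.reindex)
  also have "\<dots> = (\<Sum>i<n. coeff h i *s b i)" by (simp add: ch)
  also have "\<dots> = poly_mat h A *v x" unfolding b_def by (simp add: poly_mat_vec[OF dh])
  finally show ?thesis using dh by blast
qed


section \<open>Main setting\<close>

context
  fixes emb :: "'k::field \<Rightarrow> 'l::field"
    and M :: "'k^'n^'n" and f :: "'k poly" and v :: "'k^'n"
  assumes ext: "is_field_emb emb"
    and minp: "is_min_poly M f"
    and v_cyc: "cyclic_vector M v"
begin

abbreviation "ML \<equiv> map_matrix emb M"
abbreviation "vL \<equiv> map_vector emb v"

lemma v_facts:
  shows "inj_on (\<lambda>i. mat_pow M i *v v) {..<CARD('n)}"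
    and "vec.independent ((\<lambda>i. mat_pow M i *v v) ` {..<CARD('n)})"
    and "vec.span ((\<lambda>i. mat_pow M i *v v) ` {..<CARD('n)}) = UNIV"
  using v_cyc unfolding cyclic_vector_def Let_def by (auto simp: inj_on_iff_eq_card)

lemma K1: "degree h < CARD('n) \<Longrightarrow> poly_mat h M *v v = 0 \<Longrightarrow> h = 0"
  by (rule cyc_indep[OF v_facts(1,2)])

lemma K2: "\<exists>h. degree h < CARD('n) \<and> w = poly_mat h M *v v"
  by (rule cyc_span[OF v_facts(1,3)]) simp

lemma f_facts: "f \<noteq> 0" "poly_mat f M = 0" "\<And>p. poly_mat p M = 0 \<Longrightarrow> f dvd p"
  using minp unfolding is_min_poly_def by auto

lemma kill_all:
  assumes "poly_mat p M *v v = 0" shows "poly_mat p M = 0"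
proof -
  have "poly_mat p M *v y = 0 *v y" for y
  proof -
    obtain h where h: "y = poly_mat h M *v v" using K2 by blast
    have "poly_mat p M *v y = (poly_mat h M ** poly_mat p M) *v v"
      by (simp add: h matrix_vector_mul_assoc poly_mat_comm)
    also have "\<dots> = 0" by (simp add: matrix_vector_mul_assoc[symmetric] assms)
    finally show ?thesis by simp
  qed
  thus ?thesis using matrix_eq by blast
qed

lemma deg_f: "degree f = CARD('n)"
proof (rule antisym)
  show "CARD('n) \<le> degree f"
  proof (rule ccontr)
    assume "\<not> CARD('n) \<le> degree f"
    hence "degree f < CARD('n)" by simp
    moreover have "poly_mat f M *v v = 0" using f_facts(2) by simp
    ultimately have "f = 0" by (rule K1)
    thus False using f_facts(1) by simp
  qed
next
  obtain h where h: "degree h < CARD('n)" "mat_pow M CARD('n) *v v = poly_mat h M *v v" using K2 by blast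
  define chi where "chi = monom 1 CARD('n) - h"
  have "poly_mat chi M *v v = mat_pow M CARD('n) *v v - poly_mat h M *v v"
    unfolding chi_def poly_mat_diff matrix_vector_mult_diff_rdistrib poly_mat_monom_vec by simp
  hence "poly_mat chi M *v v = 0" using h by simp
  hence "poly_mat chi M = 0" by (rule kill_all)
  hence fd: "f dvd chi" by (rule f_facts(3))
  have cn: "coeff chi CARD('n) = 1" unfolding chi_def using h(1) by (simp add: coeff_eq_0)
  hence c0: "chi \<noteq> 0" by auto
  have "degree chi \<le> CARD('n)"
    by (rule degree_le) (use h(1) in \<open>auto simp: chi_def coeff_eq_0\<close>)
  moreover have "degree f \<le> degree chi" using fd c0 by (rule dvd_imp_degree_le)
  ultimately show "degree f \<le> CARD('n)" by simp
qed

lemma bL_eq: "mat_pow ML i *v vL = map_vector emb (mat_pow M i *v v)"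
  by (simp add: mv_mul[OF ext] mm_pow[OF ext])

lemma L_facts:
  shows "inj_on (\<lambda>i. mat_pow ML i *v vL) {..<CARD('n)}"
    and "vec.independent ((\<lambda>i. mat_pow ML i *v vL) ` {..<CARD('n)})"
proof -
  define b where "b = (\<lambda>i. mat_pow M i *v v)"
  define B where "B = b ` {..<CARD('n)}"
  have bl: "(\<lambda>i. mat_pow ML i *v vL) = (\<lambda>i. map_vector emb (b i))"
    unfolding b_def by (simp add: bL_eq)
  have injm: "inj (map_vector emb)" unfolding inj_def using mv_inj[OF ext] by blast
  have injb: "inj_on b {..<CARD('n)}" using v_facts(1) unfolding b_def .
  show inj: "inj_on (\<lambda>i. mat_pow ML i *v vL) {..<CARD('n)}"
    unfolding bl using injb injm unfolding inj_on_def by blast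
  define BL where "BL = map_vector emb ` B"
  have BL_eq: "(\<lambda>i. mat_pow ML i *v vL) ` {..<CARD('n)} = BL"
    unfolding bl BL_def B_def by auto
  have finB: "finite B" unfolding B_def by simp
  have cardBL: "card BL = CARD('n)"
    unfolding BL_eq[symmetric] using inj by (simp add: card_image)
  have ax: "axis j 1 \<in> vec.span BL" for j
  proof -
    have "axis j (1::'k) \<in> vec.span B" using v_facts(3) unfolding B_def b_def by simp
    then obtain u where u: "axis j (1::'k) = (\<Sum>w\<in>B. u w *s w)"
      using vec.span_finite[OF finB] by auto
    have "axis j (1::'l) = map_vector emb (axis j (1::'k))"
      by (simp add: vec_eq_iff mv_comp[OF ext] axis_def emb_0[OF ext] emb_1[OF ext])
    also have "\<dots> = (\<Sum>w\<in>B. emb (u w) *s map_vector emb w)"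
      unfolding u by (simp add: mv_sum[OF ext] mv_scale[OF ext])
    also have "\<dots> \<in> vec.span BL"
      by (rule vec.span_sum, rule vec.span_scale, rule vec.span_base) (simp add: BL_def)
    finally show ?thesis .
  qed
  have sp: "vec.span BL = UNIV"
  proof -
    have "y \<in> vec.span BL" for y :: "'l^'n"
    proof -
      have "y = (\<Sum>j\<in>UNIV. y $ j *s axis j 1)" by (simp add: basis_expansion)
      also have "\<dots> \<in> vec.span BL"
        by (rule vec.span_sum, rule vec.span_scale, rule ax)
      finally show ?thesis .
    qed
    thus ?thesis by auto
  qed
  have "vec.independent BL"
  proof (rule vec.card_le_dim_spanning[of BL UNIV])
    show "finite BL" unfolding BL_def using finB by simp
    show "card BL \<le> vec.dim (UNIV :: ('l^'n) set)" using cardBL by (simp add: card_cart_basis)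
  qed (auto simp: sp)
  thus "vec.independent ((\<lambda>i. mat_pow ML i *v vL) ` {..<CARD('n)})" unfolding BL_eq .
qed

lemma L1: "degree h < CARD('n) \<Longrightarrow> poly_mat h ML *v vL = 0 \<Longrightarrow> h = 0"
  by (rule cyc_indep[OF L_facts(1,2)])

lemma Lmin:
  assumes "poly_mat P ML *v vL = 0" shows "map_poly emb f dvd P"
proof -
  define F' where "F' = map_poly emb f"
  have F0: "F' \<noteq> 0" unfolding F'_def using f_facts(1) map_poly_eq_0_h[OF ext] by simp
  have dF: "degree F' = CARD('n)" unfolding F'_def using deg_f degree_map_poly_h[OF ext] by simp
  have pF: "poly_mat F' ML = 0"
    unfolding F'_def mm_poly[OF ext, symmetric] f_facts(2) mm_zero[OF ext] ..
  have "poly_mat P ML = poly_mat (P div F' * F' + P mod F') ML" by simp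
  also have "\<dots> = poly_mat (P div F') ML ** poly_mat F' ML + poly_mat (P mod F') ML"
    by (simp only: poly_mat_add poly_mat_mult)
  also have "\<dots> = poly_mat (P mod F') ML" by (simp add: pF)
  finally have "poly_mat (P mod F') ML *v vL = 0" using assms by simp
  moreover have "P mod F' = 0 \<or> degree (P mod F') < CARD('n)" using degree_mod_less[OF F0, of P] dF by simp
  ultimately have "P mod F' = 0" using L1 by blast
  thus ?thesis unfolding F'_def[symmetric] by (simp add: mod_eq_0_iff_dvd)
qed

end


section \<open>Rank weights\<close>

context
  fixes emb :: "'k::field \<Rightarrow> 'l::field"
  assumes hom: "is_field_emb emb"
begin

lemma ext_vs: "vector_space (ext_scale emb)"
  by unfold_locales
    (simp_all add: ext_scale_def emb_add[OF hom] emb_mult[OF hom] emb_1[OF hom] algebra_simps)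

lemma rw_ge1:
  fixes c :: "'l^'n"
  assumes c0: "c \<noteq> 0" shows "1 \<le> rank_weight emb c"
proof -
  interpret E: vector_space "ext_scale emb" by (rule ext_vs)
  define V where "V = E.span (range (\<lambda>i. c $ i))"
  obtain B where B: "B \<subseteq> V" "E.independent B" "V \<subseteq> E.span B" "card B = E.dim V"
    using E.basis_exists by blast
  have fin: "finite B"
    using E.independent_span_bound[of "range (\<lambda>i. c $ i)" B] B(1,2) unfolding V_def by auto
  obtain j where j: "c $ j \<noteq> 0" using c0 by (auto simp: vec_eq_iff)
  have "c $ j \<in> V" unfolding V_def by (rule E.span_base) simp
  hence "B \<noteq> {}" using B(3) j E.span_empty by auto
  hence "card B \<ge> 1" using fin by (simp add: Suc_le_eq card_gt_0_iff)
  thus ?thesis using B(4) unfolding rank_weight_def V_def by simp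
qed

lemma rw_le:
  fixes c :: "'l^'n"
  shows "rank_weight emb c \<le> CARD('n)"
proof -
  interpret E: vector_space "ext_scale emb" by (rule ext_vs)
  have "E.dim (E.span (range (\<lambda>i. c $ i))) \<le> card (range (\<lambda>i. c $ i))"
    by (rule E.dim_le_card) auto
  also have "\<dots> \<le> CARD('n)" by (rule card_image_le) simp
  finally show ?thesis unfolding rank_weight_def .
qed

lemma rw_map:
  fixes w :: "'k^'n"
  assumes w0: "w \<noteq> 0" shows "rank_weight emb (map_vector emb w) = 1"
proof -
  interpret E: vector_space "ext_scale emb" by (rule ext_vs)
  have "range (\<lambda>i. map_vector emb w $ i) \<subseteq> E.span {1}"
  proof
    fix y assume "y \<in> range (\<lambda>i. map_vector emb w $ i)"
    then obtain i where "y = emb (w $ i)" by (auto simp: mv_comp[OF hom])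
    hence "y = ext_scale emb (w $ i) 1" by (simp add: ext_scale_def)
    thus "y \<in> E.span {1}" by (simp add: E.span_singleton)
  qed
  hence "E.span (range (\<lambda>i. map_vector emb w $ i)) \<subseteq> E.span {1}"
    using E.span_mono E.span_span by blast
  hence "rank_weight emb (map_vector emb w) \<le> card {1::'l}"
    unfolding rank_weight_def by (intro E.dim_le_card) auto
  moreover have "1 \<le> rank_weight emb (map_vector emb w)"
    by (rule rw_ge1) (use w0 mv_eq_0[OF hom] in auto)
  ultimately show ?thesis by simp
qed

lemma rw_one:
  fixes c :: "'l^'n"
  assumes "rank_weight emb c = 1"
  shows "\<exists>b a. b \<noteq> 0 \<and> (\<forall>i. c $ i = emb (a i) * b)"
proof -
  interpret E: vector_space "ext_scale emb" by (rule ext_vs)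
  define V where "V = E.span (range (\<lambda>i. c $ i))"
  obtain B where B: "B \<subseteq> V" "E.independent B" "V \<subseteq> E.span B" "card B = E.dim V"
    using E.basis_exists by blast
  have "card B = 1" using B(4) assms unfolding rank_weight_def V_def by simp
  then obtain b where bB: "B = {b}" by (rule card_1_singletonE)
  have b0: "b \<noteq> 0" using B(2) E.dependent_zero bB by blast
  have "\<forall>i. \<exists>k. c $ i = emb k * b"
  proof
    fix i
    have "c $ i \<in> V" unfolding V_def by (rule E.span_base) simp
    hence "c $ i \<in> E.span {b}" using B(3) bB by auto
    thus "\<exists>k. c $ i = emb k * b" by (auto simp: E.span_singleton ext_scale_def)
  qed
  then obtain a where "\<forall>i. c $ i = emb (a i) * b" by metis
  thus ?thesis using b0 by blast
qed

end


theorem theorem4: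
  fixes emb :: "'k::field \<Rightarrow> 'l::field"
    and M :: "'k^'n^'n"
    and f :: "'k poly" and s :: nat and fs :: "nat \<Rightarrow> 'k poly" and ms :: "nat \<Rightarrow> nat"
    and g :: "'l poly" and gs :: "nat \<Rightarrow> 'l poly"
    and l :: "nat \<Rightarrow> nat" and d :: nat and v :: "'k^'n"
  assumes ext: "is_field_emb emb" and fin: "finite_degree emb"
    and deg: "ext_degree emb \<ge> CARD('n)"
    and cyc: "cyclic_matrix M"
    and minp: "is_min_poly M f"
    and f_fact: "f = (\<Prod>i<s. fs i ^ ms i)"
    and fs_irr: "\<And>i. i < s \<Longrightarrow> lead_coeff (fs i) = 1 \<and> irreducible (fs i)"
    and fs_dist: "\<And>i j. i < s \<Longrightarrow> j < s \<Longrightarrow> i \<noteq> j \<Longrightarrow> fs i \<noteq> fs j"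
    and ms_pos: "\<And>i. i < s \<Longrightarrow> ms i \<ge> 1"
    and g_monic: "lead_coeff g = 1" and g_dvd: "g dvd map_poly emb f"
    and g_fact: "g = (\<Prod>i<s. gs i)"
    and gs_monic: "\<And>i. i < s \<Longrightarrow> lead_coeff (gs i) = 1"
    and gs_dvd: "\<And>i. i < s \<Longrightarrow> gs i dvd map_poly emb (fs i ^ ms i)"
    and l_def: "\<And>i. i < s \<Longrightarrow> l i = (if gs i = 1 then 0
                  else (LEAST k. 1 \<le> k \<and> k \<le> ms i \<and> gs i dvd map_poly emb (fs i ^ k)))"
    and d_def: "d = CARD('n) - (\<Sum>i<s. l i * degree (fs i))"
    and v_cyc: "cyclic_vector M v"
  shows "(\<forall>h :: 'k poly. g dvd map_poly emb h \<longleftrightarrow> (\<Prod>i<s. fs i ^ l i) dvd h)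
     \<and> Vector_Spaces.linear smult (*s)
         (\<lambda>Q :: 'k poly. (poly_mat Q M ** poly_mat (\<Prod>i<s. fs i ^ l i) M) *v v)
     \<and> bij_betw (\<lambda>Q :: 'k poly. (poly_mat Q M ** poly_mat (\<Prod>i<s. fs i ^ l i) M) *v v)
         {Q. Q = 0 \<or> degree Q < d}
         {w. map_vector emb w \<in> cyclic_code emb M v g}
     \<and> vec.dim {w. map_vector emb w \<in> cyclic_code emb M v g}
         = (\<Sum>i<s. (ms i - l i) * degree (fs i))
     \<and> (cyclic_code emb M v g \<noteq> {0} \<longrightarrow>
         (first_gen_rank_weight emb (cyclic_code emb M v g) = 1 \<longleftrightarrow> (\<exists>i<s. l i \<le> ms i - 1)))"
proof -
  note P1 = part1[OF ext fs_irr fs_dist ms_pos g_fact gs_monic gs_dvd l_def]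
  note K1 = K1[OF ext minp v_cyc] and K2 = K2[OF ext minp v_cyc]
  note Lmin = Lmin[OF ext minp v_cyc]
  define F where "F = (\<Prod>i<s. fs i ^ l i)"
  define phi where "phi = (\<lambda>Q :: 'k poly. (poly_mat Q M ** poly_mat F M) *v v)"
  define C where "C = cyclic_code emb M v g"
  define S where "S = {w. map_vector emb w \<in> C}"
  define D where "D = {Q :: 'k poly. Q = 0 \<or> degree Q < d}"
  have part1': "\<forall>h. g dvd map_poly emb h \<longleftrightarrow> F dvd h" unfolding F_def using P1(1) by blast
  have lle: "\<And>i. i < s \<Longrightarrow> l i \<le> ms i" using P1(2) by blast
  have fs0: "fs i \<noteq> 0" if "i < s" for i using fs_irr[OF that] unfolding irreducible_def by blast
  have degF: "degree F = (\<Sum>i<s. l i * degree (fs i))"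
  proof -
    have "degree F = (\<Sum>i<s. degree (fs i ^ l i))"
      unfolding F_def by (rule degree_prod_eq_sum_degree) (simp add: fs0)
    also have "\<dots> = (\<Sum>i<s. l i * degree (fs i))"
      by (rule sum.cong) (simp_all add: degree_power_eq fs0)
    finally show ?thesis .
  qed
  have degf: "degree f = (\<Sum>i<s. ms i * degree (fs i))"
  proof -
    have "degree f = (\<Sum>i<s. degree (fs i ^ ms i))"
      unfolding f_fact by (rule degree_prod_eq_sum_degree) (simp add: fs0)
    also have "\<dots> = (\<Sum>i<s. ms i * degree (fs i))"
      by (rule sum.cong) (simp_all add: degree_power_eq fs0)
    finally show ?thesis .
  qed
  have dn: "degree f = CARD('n)" by (rule deg_f[OF ext minp v_cyc])
  have termle: "l i * degree (fs i) \<le> ms i * degree (fs i)" if "i \<in> {..<s}" for i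
    using lle that by simp
  have Fle: "degree F \<le> CARD('n)"
    unfolding dn[symmetric] degF degf by (rule sum_mono) (rule termle)
  have dval: "d = (\<Sum>i<s. (ms i - l i) * degree (fs i))"
  proof -
    have "d = (\<Sum>i<s. ms i * degree (fs i)) - (\<Sum>i<s. l i * degree (fs i))"
      using d_def dn degf by simp
    also have "\<dots> = (\<Sum>i<s. ms i * degree (fs i) - l i * degree (fs i))"
      by (rule sum_subtractf_nat[symmetric]) (rule termle)
    also have "\<dots> = (\<Sum>i<s. (ms i - l i) * degree (fs i))"
      by (simp add: diff_mult_distrib)
    finally show ?thesis .
  qed
  have dF: "d + degree F = CARD('n)" using d_def Fle degF by simp
  have F0: "F \<noteq> 0" unfolding F_def using fs0 by (simp add: prod_zero_iff)
  have phi_eq: "phi Q = poly_mat (Q * F) M *v v" for Q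
    unfolding phi_def by (simp add: poly_mat_mult)
  have phi_add: "phi (Q1 + Q2) = phi Q1 + phi Q2" for Q1 Q2
    by (simp add: phi_eq distrib_right poly_mat_add matrix_vector_mult_add_rdistrib)
  have phi_smult: "phi (smult c Q) = c *s phi Q" for c Q
    by (simp add: phi_eq poly_mat_smult matrix_vector_mul_assoc[symmetric] mat_vec)
  have phi_diff: "phi (Q1 - Q2) = phi Q1 - phi Q2" for Q1 Q2
    by (simp add: phi_eq left_diff_distrib poly_mat_diff matrix_vector_mult_diff_rdistrib)
  have phi0: "phi 0 = 0" by (simp add: phi_eq poly_mat_0)
  have phi_sum: "phi (\<Sum>i\<in>A. q i) = (\<Sum>i\<in>A. phi (q i))" for A and q :: "nat \<Rightarrow> 'k poly"
    by (induction A rule: infinite_finite_induct) (simp_all add: phi0 phi_add)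
  have vsp: "vector_space (smult :: 'k \<Rightarrow> 'k poly \<Rightarrow> 'k poly)"
    by unfold_locales (simp_all add: smult_add_right smult_add_left)
  have lin: "Vector_Spaces.linear smult (*s) phi"
    unfolding Vector_Spaces.linear_iff using vsp vec.vector_space_axioms phi_add phi_smult by blast
  have Dchar: "Q \<in> D \<longleftrightarrow> (\<forall>i\<ge>d. coeff Q i = 0)" for Q
  proof
    assume "Q \<in> D" thus "\<forall>i\<ge>d. coeff Q i = 0" unfolding D_def by (auto simp: coeff_eq_0)
  next
    assume h: "\<forall>i\<ge>d. coeff Q i = 0"
    show "Q \<in> D"
    proof (cases "Q = 0")
      case False
      hence "coeff Q (degree Q) \<noteq> 0" by simp
      hence "degree Q < d" using h not_less by blast
      thus ?thesis unfolding D_def by simp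
    qed (simp add: D_def)
  qed
  have phiK: "Q = 0" if "Q \<in> D" "phi Q = 0" for Q
  proof (rule ccontr)
    assume Q0: "Q \<noteq> 0"
    hence "degree Q < d" using that(1) unfolding D_def by simp
    hence "degree (Q * F) < CARD('n)" using degree_mult_eq[OF Q0 F0] dF by simp
    moreover have "poly_mat (Q * F) M *v v = 0" using that(2) phi_eq by simp
    ultimately have "Q * F = 0" by (rule K1)
    thus False using Q0 F0 by simp
  qed
  have inj: "inj_on phi D"
  proof (rule inj_onI)
    fix Q1 Q2 assume Q: "Q1 \<in> D" "Q2 \<in> D" "phi Q1 = phi Q2"
    have "Q1 - Q2 \<in> D" using Q(1,2) unfolding Dchar by simp
    moreover have "phi (Q1 - Q2) = 0" using Q(3) phi_diff by simp
    ultimately have "Q1 - Q2 = 0" by (rule phiK)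
    thus "Q1 = Q2" by simp
  qed
  have img: "phi Q \<in> S" for Q
  proof -
    have "g dvd map_poly emb F" using part1' by simp
    then obtain r where r: "map_poly emb F = g * r" by (rule dvdE)
    have "map_vector emb (phi Q) = poly_mat (map_poly emb (Q * F)) (map_matrix emb M) *v (map_vector emb v)"
      unfolding phi_eq by (simp add: mv_mul[OF ext] mm_poly[OF ext])
    also have "\<dots> = poly_mat ((map_poly emb Q * r) * g) (map_matrix emb M) *v (map_vector emb v)"
      by (simp add: map_poly_mult_h[OF ext] r ac_simps)
    also have "\<dots> = (poly_mat (map_poly emb Q * r) (map_matrix emb M) ** poly_mat g (map_matrix emb M)) *v (map_vector emb v)"
      by (simp add: poly_mat_mult)
    finally show ?thesis unfolding S_def C_def cyclic_code_def by blast
  qed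
  have surj: "\<exists>Q\<in>D. w = phi Q" if wS: "w \<in> S" for w
  proof -
    obtain P where P: "map_vector emb w = (poly_mat P (map_matrix emb M) ** poly_mat g (map_matrix emb M)) *v (map_vector emb v)"
      using wS unfolding S_def C_def cyclic_code_def by blast
    obtain h where h: "degree h < CARD('n)" "w = poly_mat h M *v v" using K2 by blast
    have "map_vector emb w = poly_mat (map_poly emb h) (map_matrix emb M) *v (map_vector emb v)"
      unfolding h(2) by (simp add: mv_mul[OF ext] mm_poly[OF ext])
    hence "poly_mat (map_poly emb h - P * g) (map_matrix emb M) *v (map_vector emb v) = 0"
      using P by (simp add: poly_mat_diff poly_mat_mult matrix_vector_mult_diff_rdistrib)
    hence "map_poly emb f dvd map_poly emb h - P * g" by (rule Lmin)
    hence "g dvd map_poly emb h - P * g" by (rule dvd_trans[OF g_dvd])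
    hence "g dvd (map_poly emb h - P * g) + P * g" by (rule dvd_add) simp
    hence "g dvd map_poly emb h" by simp
    hence "F dvd h" using part1' by blast
    then obtain Q where Q: "h = F * Q" by blast
    have "Q \<in> D"
    proof (cases "Q = 0")
      case False
      hence "degree h = degree F + degree Q" using Q degree_mult_eq[OF F0 False] by simp
      thus ?thesis using h(1) dF unfolding D_def by simp
    qed (simp add: D_def)
    moreover have "w = phi Q" unfolding phi_eq h(2) Q by (simp add: mult.commute)
    ultimately show ?thesis by blast
  qed
  have SD: "S = phi ` D"
  proof
    show "S \<subseteq> phi ` D"
    proof
      fix w assume "w \<in> S"
      then obtain Q where "Q \<in> D" "w = phi Q" using surj by blast
      thus "w \<in> phi ` D" by (rule rev_image_eqI)
    qed
  qed (use img in blast)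
  have bij: "bij_betw phi D S" unfolding bij_betw_def using inj SD by blast
  define e where "e i = phi (monom 1 i)" for i
  define B' where "B' = e ` {..<d}"
  have csum: "coeff (\<Sum>i<d. smult (c i) (monom 1 i)) j = (if j < d then c j else 0)" for c :: "nat \<Rightarrow> 'k" and j
    by (simp add: coeff_sum if_distrib if_distribR sum.delta cong: if_cong)
  have monoD: "monom 1 i \<in> D" if "i < d" for i
    using that unfolding Dchar by (simp add: coeff_monom)
  have inje: "inj_on e {..<d}"
  proof (rule inj_onI)
    fix i j assume ij: "i \<in> {..<d}" "j \<in> {..<d}" "e i = e j"
    hence "phi (monom 1 i) = phi (monom 1 j)" unfolding e_def by simp
    hence "monom (1::'k) i = monom 1 j" using inj_onD[OF inj _ monoD monoD] ij by simp
    thus "i = j" by (simp add: monom_eq_iff')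
  qed
  have expand: "phi Q = (\<Sum>i<d. coeff Q i *s e i)" if "Q \<in> D" for Q
  proof -
    have "Q = (\<Sum>i<d. smult (coeff Q i) (monom 1 i))"
      using that unfolding Dchar by (intro poly_eqI) (auto simp: csum)
    hence "phi Q = phi (\<Sum>i<d. smult (coeff Q i) (monom 1 i))" by simp
    also have "\<dots> = (\<Sum>i<d. coeff Q i *s e i)" by (simp add: phi_sum phi_smult e_def)
    finally show ?thesis .
  qed
  have finB': "finite B'" unfolding B'_def by simp
  have indB': "vec.independent B'"
  proof (rule vec.independent_if_scalars_zero[OF finB'])
    fix u x assume sum0: "(\<Sum>x\<in>B'. u x *s x) = 0" and x: "x \<in> B'"
    define Q' where "Q' = (\<Sum>i<d. smult (u (e i)) (monom 1 i))"
    have "(\<Sum>x\<in>B'. u x *s x) = (\<Sum>i<d. u (e i) *s e i)"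
      unfolding B'_def using inje by (simp add: sum.reindex)
    also have "\<dots> = phi Q'" unfolding Q'_def by (simp add: phi_sum phi_smult e_def)
    finally have "phi Q' = 0" using sum0 by simp
    moreover have "Q' \<in> D" unfolding Dchar Q'_def by (simp add: csum)
    ultimately have "Q' = 0" using phiK by blast
    obtain j where j: "j < d" "x = e j" using x unfolding B'_def by blast
    have "coeff Q' j = u (e j)" unfolding Q'_def using j(1) by (simp add: csum)
    thus "u x = 0" using \<open>Q' = 0\<close> j by simp
  qed
  have subS: "vec.subspace S"
    unfolding vec.subspace_def SD
  proof (intro conjI ballI allI)
    show "0 \<in> phi ` D" using phi0 by (force simp: D_def)
  next
    fix x y assume "x \<in> phi ` D" "y \<in> phi ` D"
    then obtain Q1 Q2 where "Q1 \<in> D" "Q2 \<in> D" "x = phi Q1" "y = phi Q2" by blast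
    moreover have "Q1 + Q2 \<in> D" using calculation unfolding Dchar by simp
    ultimately show "x + y \<in> phi ` D" using phi_add by (metis image_eqI)
  next
    fix c x assume "x \<in> phi ` D"
    then obtain Q where "Q \<in> D" "x = phi Q" by blast
    moreover have "smult c Q \<in> D" using calculation unfolding Dchar by simp
    ultimately show "c *s x \<in> phi ` D" using phi_smult by (metis image_eqI)
  qed
  have spanB': "vec.span B' = S"
  proof
    show "vec.span B' \<subseteq> S"
      by (rule vec.span_minimal[OF _ subS]) (auto simp: B'_def e_def img)
  next
    show "S \<subseteq> vec.span B'"
    proof
      fix w assume "w \<in> S"
      then obtain Q where Q: "Q \<in> D" "w = phi Q" using surj by blast
      have "(\<Sum>i<d. coeff Q i *s e i) \<in> vec.span B'"
        by (rule vec.span_sum, rule vec.span_scale, rule vec.span_base) (simp add: B'_def)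
      thus "w \<in> vec.span B'" using Q expand by simp
    qed
  qed
  have dimS: "vec.dim S = d"
  proof -
    have "vec.dim S = vec.dim (vec.span B')" using spanB' by simp
    also have "\<dots> = card B'" by (rule vec.dim_span_eq_card_independent[OF indB'])
    also have "\<dots> = d" unfolding B'_def using inje by (simp add: card_image)
    finally show ?thesis .
  qed
  have Sne: "(\<exists>w\<in>S. w \<noteq> 0) \<longleftrightarrow> 0 < d"
  proof
    assume "\<exists>w\<in>S. w \<noteq> 0"
    then obtain w where "w \<in> S" "w \<noteq> 0" by blast
    then obtain Q where "Q \<in> D" "w = phi Q" "Q \<noteq> 0" using surj phi0 by blast
    thus "0 < d" unfolding D_def by auto
  next
    assume d0: "0 < d"
    have "(1::'k poly) \<in> D" using d0 unfolding D_def by simp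
    hence "phi 1 \<noteq> 0" using phiK by fastforce
    thus "\<exists>w\<in>S. w \<noteq> 0" using img by blast
  qed
  have dpos: "0 < d \<longleftrightarrow> (\<exists>i<s. l i \<le> ms i - 1)"
  proof -
    define t where "t i = (ms i - l i) * degree (fs i)" for i
    have dt: "d = (\<Sum>i<s. t i)" unfolding t_def dval ..
    have ti: "0 < t i \<longleftrightarrow> l i \<le> ms i - 1" if i: "i < s" for i
    proof -
      have "0 < degree (fs i)" using irreducible_degree_pos fs_irr[OF i] by blast
      hence "0 < t i \<longleftrightarrow> 0 < ms i - l i" unfolding t_def by simp
      also have "\<dots> \<longleftrightarrow> l i \<le> ms i - 1" using ms_pos[OF i] by arith
      finally show ?thesis .
    qed
    have "d = 0 \<longleftrightarrow> (\<forall>i\<in>{..<s}. t i = 0)" unfolding dt by (rule sum_eq_0_iff) simp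
    hence "0 < d \<longleftrightarrow> (\<exists>i\<in>{..<s}. 0 < t i)" by auto
    thus ?thesis unfolding Bex_def lessThan_iff using ti by blast
  qed
  have Cscale: "t *s c \<in> C" if cC: "c \<in> C" for t c
  proof -
    obtain P where P: "c = (poly_mat P (map_matrix emb M) ** poly_mat g (map_matrix emb M)) *v (map_vector emb v)"
      using cC unfolding C_def cyclic_code_def by blast
    have "t *s c = (poly_mat (smult t P) (map_matrix emb M) ** poly_mat g (map_matrix emb M)) *v (map_vector emb v)"
      unfolding P poly_mat_smult
      by (simp add: mat_vec[symmetric] matrix_vector_mul_assoc matrix_mul_assoc)
    thus ?thesis unfolding C_def cyclic_code_def by blast
  qed
  have C0: "0 \<in> C"
  proof -
    have "(0::'l^'n) = (poly_mat 0 (map_matrix emb M) ** poly_mat g (map_matrix emb M)) *v (map_vector emb v)" by (simp add: poly_mat_0)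
    thus ?thesis unfolding C_def cyclic_code_def by blast
  qed
  have rw: "first_gen_rank_weight emb C = 1 \<longleftrightarrow> (\<exists>w\<in>S. w \<noteq> 0)" if Cn: "C \<noteq> {0}"
  proof -
    define W where "W = {rank_weight emb c | c. c \<in> C \<and> c \<noteq> 0}"
    have Wne: "W \<noteq> {}" using Cn C0 unfolding W_def by blast
    have Wfin: "finite W"
      by (rule finite_subset[of _ "{..CARD('n)}"]) (auto simp: W_def rw_le[OF ext])
    have Wge: "\<forall>x\<in>W. 1 \<le> x" unfolding W_def using rw_ge1[OF ext] by blast
    have "first_gen_rank_weight emb C = Min W" unfolding first_gen_rank_weight_def W_def ..
    moreover have "Min W = 1 \<longleftrightarrow> 1 \<in> W"
    proof
      assume "Min W = 1" thus "1 \<in> W" using Min_in[OF Wfin Wne] by simp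
    next
      assume "1 \<in> W"
      hence "Min W \<le> 1" using Min_le[OF Wfin] by blast
      moreover have "1 \<le> Min W" using Min_in[OF Wfin Wne] Wge by blast
      ultimately show "Min W = 1" by simp
    qed
    moreover have "1 \<in> W \<longleftrightarrow> (\<exists>w\<in>S. w \<noteq> 0)"
    proof
      assume "1 \<in> W"
      then obtain c where c: "c \<in> C" "c \<noteq> 0" "rank_weight emb c = 1" unfolding W_def by auto
      obtain b a where ba: "b \<noteq> 0" "\<forall>i. c $ i = emb (a i) * b" using rw_one[OF ext c(3)] by blast
      define w where "w = (\<chi> i. a i)"
      have "map_vector emb w = inverse b *s c"
        unfolding w_def using ba by (simp add: vec_eq_iff mv_comp[OF ext])
      hence "w \<in> S" unfolding S_def using Cscale[OF c(1)] by simp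
      moreover have "w \<noteq> 0"
      proof
        assume "w = 0"
        hence "\<forall>i. a i = 0" unfolding w_def by (simp add: vec_eq_iff)
        hence "c = 0" using ba by (simp add: vec_eq_iff emb_0[OF ext])
        thus False using c(2) by simp
      qed
      ultimately show "\<exists>w\<in>S. w \<noteq> 0" by blast
    next
      assume "\<exists>w\<in>S. w \<noteq> 0"
      then obtain w where w: "w \<in> S" "w \<noteq> 0" by blast
      have "map_vector emb w \<in> C" "map_vector emb w \<noteq> 0"
        using w mv_eq_0[OF ext] unfolding S_def by auto
      moreover have "rank_weight emb (map_vector emb w) = 1" by (rule rw_map[OF ext w(2)])
      ultimately show "1 \<in> W" unfolding W_def by force
    qed
    ultimately show ?thesis by simp
  qed
  show ?thesis
  proof (intro conjI)
    show "\<forall>h. g dvd map_poly emb h \<longleftrightarrow> (\<Prod>i<s. fs i ^ l i) dvd h"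
      using part1' unfolding F_def .
    show "Vector_Spaces.linear smult (*s) (\<lambda>Q. (poly_mat Q M ** poly_mat (\<Prod>i<s. fs i ^ l i) M) *v v)"
      using lin unfolding phi_def F_def .
    show "bij_betw (\<lambda>Q. (poly_mat Q M ** poly_mat (\<Prod>i<s. fs i ^ l i) M) *v v)
         {Q. Q = 0 \<or> degree Q < d} {w. map_vector emb w \<in> cyclic_code emb M v g}"
      using bij unfolding phi_def F_def D_def S_def C_def .
    have "vec.dim S = (\<Sum>i<s. (ms i - l i) * degree (fs i))" using dimS dval by simp
    thus "vec.dim {w. map_vector emb w \<in> cyclic_code emb M v g} = (\<Sum>i<s. (ms i - l i) * degree (fs i))"
      unfolding S_def C_def .
    show "cyclic_code emb M v g \<noteq> {0} \<longrightarrow>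
         (first_gen_rank_weight emb (cyclic_code emb M v g) = 1 \<longleftrightarrow> (\<exists>i<s. l i \<le> ms i - 1))"
    proof
      assume "cyclic_code emb M v g \<noteq> {0}"
      hence "C \<noteq> {0}" unfolding C_def .
      hence "first_gen_rank_weight emb C = 1 \<longleftrightarrow> (\<exists>i<s. l i \<le> ms i - 1)"
        using rw Sne dpos by simp
      thus "first_gen_rank_weight emb (cyclic_code emb M v g) = 1 \<longleftrightarrow> (\<exists>i<s. l i \<le> ms i - 1)"
        unfolding C_def .
    qed
  qed
qed

end
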